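(* Let $a\neq0$ be a constant and let $\phi(x,t)$ be a smooth function with $\phi_x\neq0$ satisfying $$(1-\partial_x^2)\frac{\phi_t}{\phi_x}+a\{\phi;x\}=0.$$ Then $u=-\phi_t/\phi_x$ satisfies the Camassa–Holm equation $$u_t-u_{xxt}+a u_{xxx}+3uu_x-2u_xu_{xx}-uu_{xxx}=0.$$
   Context: The Schwarzian derivative of a function $\phi(x,t)$ with $\phi_x\neq0$ is $\{\phi;x\}=\frac{\phi_{xxx}}{\phi_x}-\frac32\frac{\phi_{xx}^2}{\phi_x^2}$. All functions are smooth. *)

theory Defs
  imports "HOL-Analysis.Analysis"
begin

definition pdx :: "(real \<Rightarrow> real \<Rightarrow> real) \<Rightarrow> real \<Rightarrow> real \<Rightarrow> real" where
  "pdx f = (\<lambda>x t. deriv (\<lambda>y. f y t) x)"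

definition pdt :: "(real \<Rightarrow> real \<Rightarrow> real) \<Rightarrow> real \<Rightarrow> real \<Rightarrow> real" where
  "pdt f = (\<lambda>x t. deriv (\<lambda>s. f x s) t)"

text \<open>Iterated partial derivative: True = d/dx, False = d/dt (applied right to left).\<close>
fun iterD :: "bool list \<Rightarrow> (real \<Rightarrow> real \<Rightarrow> real) \<Rightarrow> real \<Rightarrow> real \<Rightarrow> real" where
  "iterD [] f = f"
| "iterD (b # bs) f = (if b then pdx else pdt) (iterD bs f)"

definition smooth2 :: "(real \<Rightarrow> real \<Rightarrow> real) \<Rightarrow> bool" where
  "smooth2 f \<longleftrightarrow> (\<forall>bs. continuous_on UNIV (\<lambda>(x, t). iterD bs f x t) \<and>
      (\<forall>x t. (\<lambda>y. iterD bs f y t) differentiable (at x) \<and>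
             (\<lambda>s. iterD bs f x s) differentiable (at t)))"

definition schwarzian_x :: "(real \<Rightarrow> real \<Rightarrow> real) \<Rightarrow> real \<Rightarrow> real \<Rightarrow> real" where
  "schwarzian_x \<phi> x t = pdx (pdx (pdx \<phi>)) x t / pdx \<phi> x t
     - 3/2 * (pdx (pdx \<phi>) x t)\<^sup>2 / (pdx \<phi> x t)\<^sup>2"

end

theory Submission
  imports Defs
begin

lemma iterD_append: "iterD bs (iterD cs f) = iterD (bs @ cs) f"
  by (induction bs) auto

lemma smooth2_pdx: "smooth2 f \<Longrightarrow> smooth2 (pdx f)"
  unfolding smooth2_def
proof (intro allI)
  fix bs assume H: "\<forall>bs. continuous_on UNIV (\<lambda>(x, t). iterD bs f x t) \<and>
      (\<forall>x t. (\<lambda>y. iterD bs f y t) differentiable (at x) \<and>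
             (\<lambda>s. iterD bs f x s) differentiable (at t))"
  have e: "iterD bs (pdx f) = iterD (bs @ [True]) f"
    using iterD_append[of bs "[True]" f] by simp
  show "continuous_on UNIV (\<lambda>(x, t). iterD bs (pdx f) x t) \<and>
      (\<forall>x t. (\<lambda>y. iterD bs (pdx f) y t) differentiable (at x) \<and>
             (\<lambda>s. iterD bs (pdx f) x s) differentiable (at t))"
    unfolding e using H by blast
qed

lemma smooth2_pdt: "smooth2 f \<Longrightarrow> smooth2 (pdt f)"
  unfolding smooth2_def
proof (intro allI)
  fix bs assume H: "\<forall>bs. continuous_on UNIV (\<lambda>(x, t). iterD bs f x t) \<and>
      (\<forall>x t. (\<lambda>y. iterD bs f y t) differentiable (at x) \<and>
             (\<lambda>s. iterD bs f x s) differentiable (at t))"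
  have e: "iterD bs (pdt f) = iterD (bs @ [False]) f"
    using iterD_append[of bs "[False]" f] by simp
  show "continuous_on UNIV (\<lambda>(x, t). iterD bs (pdt f) x t) \<and>
      (\<forall>x t. (\<lambda>y. iterD bs (pdt f) y t) differentiable (at x) \<and>
             (\<lambda>s. iterD bs (pdt f) x s) differentiable (at t))"
    unfolding e using H by blast
qed

lemma smooth2_dx:
  assumes "smooth2 f"
  shows "((\<lambda>y. f y t) has_real_derivative pdx f x t) (at x within s)"
proof -
  have "(\<lambda>y. iterD [] f y t) differentiable (at x)"
    using assms unfolding smooth2_def by blast
  then have "(\<lambda>y. f y t) differentiable (at x)" by simp
  then show ?thesis
    unfolding pdx_def
    by (simp add: DERIV_deriv_iff_real_differentiable has_field_derivative_at_within)
qed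

lemma smooth2_dt:
  assumes "smooth2 f"
  shows "((\<lambda>s. f x s) has_real_derivative pdt f x t) (at t within S)"
proof -
  have "(\<lambda>s. iterD [] f x s) differentiable (at t)"
    using assms unfolding smooth2_def by blast
  then have "(\<lambda>s. f x s) differentiable (at t)" by simp
  then show ?thesis
    unfolding pdt_def
    by (simp add: DERIV_deriv_iff_real_differentiable has_field_derivative_at_within)
qed

lemma pdx_eqI:
  assumes "\<And>x t. ((\<lambda>y. f y t) has_real_derivative g x t) (at x)"
  shows "pdx f = g"
  using assms by (auto simp: pdx_def intro!: ext DERIV_imp_deriv)

lemma pdt_eqI:
  assumes "\<And>x t. ((\<lambda>s. f x s) has_real_derivative g x t) (at t)"
  shows "pdt f = g"
  using assms by (auto simp: pdt_def intro!: ext DERIV_imp_deriv)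

lemma dxI:
  assumes "\<And>x t. ((\<lambda>y. f y t) has_real_derivative g x t) (at x)"
  shows "((\<lambda>y. f y t) has_real_derivative pdx f x t) (at x within s)"
  using assms pdx_eqI[OF assms] by (simp add: has_field_derivative_at_within)

lemma dtI:
  assumes "\<And>x t. ((\<lambda>s. f x s) has_real_derivative g x t) (at t)"
  shows "((\<lambda>s. f x s) has_real_derivative pdt f x t) (at t within S)"
  using assms pdt_eqI[OF assms] by (simp add: has_field_derivative_at_within)

lemma clairaut_key:
  assumes f: "smooth2 f" and h: "h > 0"
  shows "\<exists>\<xi> \<eta> \<xi>' \<eta>'. x0 < \<xi> \<and> \<xi> < x0 + h \<and> t0 < \<eta> \<and> \<eta> < t0 + h \<and>
     x0 < \<xi>' \<and> \<xi>' < x0 + h \<and> t0 < \<eta>' \<and> \<eta>' < t0 + h \<and>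
     pdt (pdx f) \<xi> \<eta> = pdx (pdt f) \<xi>' \<eta>'"
proof -
  have fx: "smooth2 (pdx f)" and ft: "smooth2 (pdt f)" using f smooth2_pdx smooth2_pdt by auto
  have "\<exists>z. x0 < z \<and> z < x0 + h \<and>
     (f (x0+h) (t0+h) - f (x0+h) t0) - (f x0 (t0+h) - f x0 t0)
       = ((x0+h) - x0) * (pdx f z (t0+h) - pdx f z t0)"
    by (rule MVT2[where f="\<lambda>y. f y (t0+h) - f y t0"])
       (use h in \<open>auto intro!: derivative_eq_intros smooth2_dx[OF f]\<close>)
  then obtain \<xi> where \<xi>: "x0 < \<xi>" "\<xi> < x0 + h"
    "(f (x0+h) (t0+h) - f (x0+h) t0) - (f x0 (t0+h) - f x0 t0) = h * (pdx f \<xi> (t0+h) - pdx f \<xi> t0)"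
    by auto
  have "\<exists>z. t0 < z \<and> z < t0 + h \<and>
     pdx f \<xi> (t0+h) - pdx f \<xi> t0 = ((t0+h) - t0) * pdt (pdx f) \<xi> z"
    by (rule MVT2[where f="\<lambda>s. pdx f \<xi> s"])
       (use h in \<open>auto intro!: smooth2_dt[OF fx]\<close>)
  then obtain \<eta> where \<eta>: "t0 < \<eta>" "\<eta> < t0 + h"
    "pdx f \<xi> (t0+h) - pdx f \<xi> t0 = h * pdt (pdx f) \<xi> \<eta>" by auto
  have "\<exists>z. t0 < z \<and> z < t0 + h \<and>
     (f (x0+h) (t0+h) - f x0 (t0+h)) - (f (x0+h) t0 - f x0 t0)
       = ((t0+h) - t0) * (pdt f (x0+h) z - pdt f x0 z)"
    by (rule MVT2[where f="\<lambda>s. f (x0+h) s - f x0 s"])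
       (use h in \<open>auto intro!: derivative_eq_intros smooth2_dt[OF f]\<close>)
  then obtain \<eta>' where \<eta>': "t0 < \<eta>'" "\<eta>' < t0 + h"
    "(f (x0+h) (t0+h) - f x0 (t0+h)) - (f (x0+h) t0 - f x0 t0) = h * (pdt f (x0+h) \<eta>' - pdt f x0 \<eta>')"
    by auto
  have "\<exists>z. x0 < z \<and> z < x0 + h \<and>
     pdt f (x0+h) \<eta>' - pdt f x0 \<eta>' = ((x0+h) - x0) * pdx (pdt f) z \<eta>'"
    by (rule MVT2[where f="\<lambda>y. pdt f y \<eta>'"])
       (use h in \<open>auto intro!: smooth2_dx[OF ft]\<close>)
  then obtain \<xi>' where \<xi>': "x0 < \<xi>'" "\<xi>' < x0 + h"
    "pdt f (x0+h) \<eta>' - pdt f x0 \<eta>' = h * pdx (pdt f) \<xi>' \<eta>'" by auto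
  have "h * (h * pdt (pdx f) \<xi> \<eta>) = h * (h * pdx (pdt f) \<xi>' \<eta>')"
    using \<xi>(3) \<eta>(3) \<eta>'(3) \<xi>'(3) by (simp add: algebra_simps)
  then have "pdt (pdx f) \<xi> \<eta> = pdx (pdt f) \<xi>' \<eta>'" using h by simp
  then show ?thesis using \<xi> \<eta> \<xi>' \<eta>' by blast
qed

lemma clairaut:
  assumes f: "smooth2 f"
  shows "pdt (pdx f) = pdx (pdt f)"
proof (intro ext, rule ccontr)
  fix x0 t0
  assume ne: "pdt (pdx f) x0 t0 \<noteq> pdx (pdt f) x0 t0"
  define F1 where "F1 = (\<lambda>(x, t). pdt (pdx f) x t)"
  define F2 where "F2 = (\<lambda>(x, t). pdx (pdt f) x t)"
  have "continuous_on UNIV (\<lambda>(x, t). iterD [False, True] f x t)"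
    using f unfolding smooth2_def by blast
  then have "continuous_on UNIV F1" unfolding F1_def by simp
  then have c1: "continuous (at (x0, t0)) F1" by (simp add: continuous_on_eq_continuous_at)
  have "continuous_on UNIV (\<lambda>(x, t). iterD [True, False] f x t)"
    using f unfolding smooth2_def by blast
  then have "continuous_on UNIV F2" unfolding F2_def by simp
  then have c2: "continuous (at (x0, t0)) F2" by (simp add: continuous_on_eq_continuous_at)
  define e where "e = \<bar>pdt (pdx f) x0 t0 - pdx (pdt f) x0 t0\<bar> / 2"
  have e: "e > 0" using ne by (simp add: e_def)
  obtain d1 where d1: "d1 > 0" "\<And>z. dist z (x0, t0) < d1 \<Longrightarrow> dist (F1 z) (F1 (x0, t0)) < e"
    using c1 e unfolding continuous_at_eps_delta by blast
  obtain d2 where d2: "d2 > 0" "\<And>z. dist z (x0, t0) < d2 \<Longrightarrow> dist (F2 z) (F2 (x0, t0)) < e"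
    using c2 e unfolding continuous_at_eps_delta by blast
  define h where "h = min d1 d2 / 2"
  have h: "h > 0" using d1 d2 by (simp add: h_def)
  obtain \<xi> \<eta> \<xi>' \<eta>' where P: "x0 < \<xi>" "\<xi> < x0 + h" "t0 < \<eta>" "\<eta> < t0 + h"
     "x0 < \<xi>'" "\<xi>' < x0 + h" "t0 < \<eta>'" "\<eta>' < t0 + h"
     "pdt (pdx f) \<xi> \<eta> = pdx (pdt f) \<xi>' \<eta>'"
    using clairaut_key[OF f h, of x0 t0] by blast
  have dist_bound: "dist (a, b) (x0, t0) < 2 * h" if "x0 < a" "a < x0 + h" "t0 < b" "b < t0 + h" for a b
  proof -
    have "dist (a, b) (x0, t0) \<le> \<bar>dist a x0\<bar> + \<bar>dist b t0\<bar>"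
      unfolding dist_Pair_Pair by (rule sqrt_sum_squares_le_sum_abs)
    also have "\<dots> < 2 * h" using that by (simp add: dist_real_def)
    finally show ?thesis .
  qed
  have "dist (F1 (\<xi>, \<eta>)) (F1 (x0, t0)) < e"
    using d1(2) dist_bound[OF P(1-4)] h_def by auto
  then have A: "\<bar>pdt (pdx f) \<xi> \<eta> - pdt (pdx f) x0 t0\<bar> < e"
    unfolding F1_def dist_real_def by simp
  have "dist (F2 (\<xi>', \<eta>')) (F2 (x0, t0)) < e"
    using d2(2) dist_bound[OF P(5-8)] h_def by auto
  then have B: "\<bar>pdx (pdt f) \<xi>' \<eta>' - pdx (pdt f) x0 t0\<bar> < e"
    unfolding F2_def dist_real_def by simp
  have tri: "\<And>a b c :: real. \<bar>a - b\<bar> < \<bar>b - c\<bar> / 2 \<Longrightarrow> \<bar>a - c\<bar> < \<bar>b - c\<bar> / 2 \<Longrightarrow> False"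
    by (auto simp: abs_if split: if_split_asm)
  show False
    using A B P(9) tri unfolding e_def by metis
qed


lemma schw_iden:
  fixes P Px Pxx Pxxx U Ux Uxx Uxxx Pt Pxt Pxxt :: real
  assumes P: "P \<noteq> 0"
    and Pt: "Pt = - (Ux * P + U * Px)"
    and Pxt: "Pxt = - (Uxx * P + 2 * Ux * Px + U * Pxx)"
    and Pxxt: "Pxxt = - (Uxxx * P + 3 * Uxx * Px + 3 * Ux * Pxx + U * Pxxx)"
  shows "((Pxxt * P - Pxx * Pt) / P^2 - 3/2 * (2 * Px * Pxt * P^2 - Px^2 * (2 * P * Pt)) / (P^2)^2)
     + U * ((Pxxx * P - Pxx * Px) / P^2 - 3/2 * (2 * Px * Pxx * P^2 - Px^2 * (2 * P * Px)) / (P^2)^2)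
     + 2 * Ux * (Pxx / P - 3/2 * Px^2 / P^2) + Uxxx = 0"
  unfolding Pt Pxt Pxxt using P by (simp add: field_simps) algebra

lemma final_alg:
  fixes a St U Sx U1 S U2 U3 Ut :: real
  assumes "St + U * Sx + 2 * U1 * S + U3 = 0" "U3 = U1 - a * Sx" "U2 = U - a * S"
  shows "Ut - (Ut - a * St) + a * U3 + 3 * U * U1 - 2 * U1 * U2 - U * U3 = 0"
proof -
  show ?thesis using assms by algebra
qed

theorem mainTheorem3:
  fixes a :: real and \<phi> :: "real \<Rightarrow> real \<Rightarrow> real"
  assumes "a \<noteq> 0"
    and "smooth2 \<phi>"
    and "\<And>x t. pdx \<phi> x t \<noteq> 0"
    and "\<And>x t. (let w = (\<lambda>x t. pdt \<phi> x t / pdx \<phi> x t) in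
                  w x t - pdx (pdx w) x t) + a * schwarzian_x \<phi> x t = 0"
  shows "\<And>x t. (let u = (\<lambda>x t. - pdt \<phi> x t / pdx \<phi> x t) in
            pdt u x t - pdt (pdx (pdx u)) x t + a * pdx (pdx (pdx u)) x t
            + 3 * u x t * pdx u x t - 2 * pdx u x t * pdx (pdx u) x t
            - u x t * pdx (pdx (pdx u)) x t) = 0"
proof -
  have s\<phi>: "smooth2 \<phi>" by (rule assms(2))
  define p where "p = pdx \<phi>"
  define q where "q = pdt \<phi>"
  have sp: "smooth2 p" unfolding p_def using s\<phi> by (rule smooth2_pdx)
  have sq: "smooth2 q" unfolding q_def using s\<phi> by (rule smooth2_pdt)
  have spx: "smooth2 (pdx p)" using sp by (rule smooth2_pdx)
  have spxx: "smooth2 (pdx (pdx p))" using spx by (rule smooth2_pdx)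
  have sqx: "smooth2 (pdx q)" using sq by (rule smooth2_pdx)
  have spt: "smooth2 (pdt p)" using sp by (rule smooth2_pdt)
  have spxt: "smooth2 (pdt (pdx p))" using spx by (rule smooth2_pdt)
  have p0: "\<And>x t. p x t \<noteq> 0" unfolding p_def by (rule assms(3))
  define w where "w = (\<lambda>x t. q x t / p x t)"
  define u where "u = (\<lambda>x t. - q x t / p x t)"
  define S where "S = (\<lambda>x t. pdx (pdx p) x t / p x t - 3/2 * (pdx p x t)^2 / (p x t)^2)"
  have hyp: "\<And>x t. w x t - pdx (pdx w) x t + a * S x t = 0"
    using assms(4) unfolding Let_def w_def S_def schwarzian_x_def p_def q_def by simp
  define wx where "wx = (\<lambda>x t. (pdx q x t * p x t - q x t * pdx p x t) / (p x t)^2)"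
  define wxx where "wxx = (\<lambda>x t. ((pdx (pdx q) x t * p x t - q x t * pdx (pdx p) x t) * (p x t)^2
       - (pdx q x t * p x t - q x t * pdx p x t) * (2 * p x t * pdx p x t)) / ((p x t)^2)^2)"
  have Dw: "((\<lambda>y. w y t) has_real_derivative wx x t) (at x)" for x t
    unfolding w_def wx_def
    by (auto intro!: derivative_eq_intros smooth2_dx[OF sq] smooth2_dx[OF sp] simp: p0 field_simps power2_eq_square)
  have Dwx: "((\<lambda>y. wx y t) has_real_derivative wxx x t) (at x)" for x t
    unfolding wx_def wxx_def
    by (auto intro!: derivative_eq_intros smooth2_dx[OF sq] smooth2_dx[OF sp] smooth2_dx[OF sqx] smooth2_dx[OF spx] simp: p0 field_simps power2_eq_square)
  have Du0: "((\<lambda>y. u y t) has_real_derivative - wx x t) (at x)" for x t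
    unfolding u_def wx_def
    by (auto intro!: derivative_eq_intros smooth2_dx[OF sq] smooth2_dx[OF sp] simp: p0 field_simps power2_eq_square)
  have pdxw: "pdx w = wx" by (rule pdx_eqI[OF Dw])
  have pdxwx: "pdx wx = wxx" by (rule pdx_eqI[OF Dwx])
  have pdxu: "pdx u = (\<lambda>x t. - wx x t)" by (rule pdx_eqI[OF Du0])
  have wxx_eq: "wxx x t = w x t + a * S x t" for x t
    using hyp[of x t] unfolding pdxw pdxwx by simp
  have uw: "u x t = - w x t" for x t unfolding u_def w_def by simp
  have pdxxu: "pdx (pdx u) = (\<lambda>x t. u x t - a * S x t)"
    unfolding pdxu
    by (rule pdx_eqI) (rule derivative_eq_intros Dwx | simp add: wxx_eq uw)+
  have spxxx: "smooth2 (pdx (pdx (pdx p)))" using spxx by (rule smooth2_pdx)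
  define Sx where "Sx = (\<lambda>x t. (pdx (pdx (pdx p)) x t * p x t - pdx (pdx p) x t * pdx p x t) / (p x t)^2
     - 3/2 * (2 * pdx p x t * pdx (pdx p) x t * (p x t)^2 - (pdx p x t)^2 * (2 * p x t * pdx p x t)) / ((p x t)^2)^2)"
  define St where "St = (\<lambda>x t. (pdt (pdx (pdx p)) x t * p x t - pdx (pdx p) x t * pdt p x t) / (p x t)^2
     - 3/2 * (2 * pdx p x t * pdt (pdx p) x t * (p x t)^2 - (pdx p x t)^2 * (2 * p x t * pdt p x t)) / ((p x t)^2)^2)"
  have DSx: "((\<lambda>y. S y t) has_real_derivative Sx x t) (at x)" for x t
    unfolding S_def Sx_def
    by (auto intro!: derivative_eq_intros smooth2_dx[OF sp] smooth2_dx[OF spx] smooth2_dx[OF spxx] simp: p0 field_simps power2_eq_square)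
  have DSt: "((\<lambda>s. S x s) has_real_derivative St x t) (at t)" for x t
    unfolding S_def St_def
    by (auto intro!: derivative_eq_intros smooth2_dt[OF sp] smooth2_dt[OF spx] smooth2_dt[OF spxx] simp: p0 field_simps power2_eq_square)
  have Dut0: "((\<lambda>s. u x s) has_real_derivative - ((pdt q x t * p x t - q x t * pdt p x t) / (p x t)^2)) (at t)" for x t
    unfolding u_def
    by (auto intro!: derivative_eq_intros smooth2_dt[OF sq] smooth2_dt[OF sp] simp: p0 field_simps power2_eq_square)
  note Du = dxI[OF Du0]
  note Dut = dtI[OF Dut0]
  have D1u: "((\<lambda>y. pdx u y t) has_real_derivative pdx (pdx u) x t) (at x within s)" for x t s
  proof (rule dxI)
    fix x t show "((\<lambda>y. pdx u y t) has_real_derivative - wxx x t) (at x)"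
      unfolding pdxu by (auto intro!: derivative_eq_intros Dwx)
  qed
  have D2u0: "((\<lambda>y. pdx (pdx u) y t) has_real_derivative pdx u x t - a * Sx x t) (at x)" for x t
    unfolding pdxxu by (auto intro!: derivative_eq_intros Du DSx)
  have pdx3u: "pdx (pdx (pdx u)) = (\<lambda>x t. pdx u x t - a * Sx x t)"
    by (rule pdx_eqI[OF D2u0])
  note D2u = dxI[OF D2u0]
  have pdt2u: "pdt (pdx (pdx u)) = (\<lambda>x t. pdt u x t - a * St x t)"
    unfolding pdxxu by (rule pdt_eqI) (auto intro!: derivative_eq_intros Dut DSt)
  have C0: "pdt p = pdx q" unfolding p_def q_def by (rule clairaut[OF s\<phi>])
  have C1: "pdt (pdx p) = pdx (pdt p)" by (rule clairaut[OF sp])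
  have C2: "pdt (pdx (pdx p)) = pdx (pdt (pdx p))" by (rule clairaut[OF spx])
  have qeq: "q = (\<lambda>x t. - (u x t * p x t))"
    unfolding u_def by (auto intro!: ext simp: p0)
  have pt: "pdt p = (\<lambda>x t. - (pdx u x t * p x t + u x t * pdx p x t))"
    unfolding C0 qeq
    by (rule pdx_eqI) (auto intro!: derivative_eq_intros Du smooth2_dx[OF sp])
  have pxt: "pdt (pdx p) = (\<lambda>x t. - (pdx (pdx u) x t * p x t + 2 * pdx u x t * pdx p x t + u x t * pdx (pdx p) x t))"
    unfolding C1 pt
    by (rule pdx_eqI) (auto intro!: derivative_eq_intros Du D1u smooth2_dx[OF sp] smooth2_dx[OF spx] simp: algebra_simps)
  have pxxt: "pdt (pdx (pdx p)) = (\<lambda>x t. - (pdx (pdx (pdx u)) x t * p x t + 3 * pdx (pdx u) x t * pdx p x t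
      + 3 * pdx u x t * pdx (pdx p) x t + u x t * pdx (pdx (pdx p)) x t))"
    unfolding C2 pxt
    by (rule pdx_eqI) (auto intro!: derivative_eq_intros Du D1u D2u smooth2_dx[OF sp] smooth2_dx[OF spx] smooth2_dx[OF spxx] simp: algebra_simps)
  have ue: "(\<lambda>x t. - pdt \<phi> x t / pdx \<phi> x t) = u" unfolding u_def p_def q_def ..
  show "\<And>x t. (let u = (\<lambda>x t. - pdt \<phi> x t / pdx \<phi> x t) in
            pdt u x t - pdt (pdx (pdx u)) x t + a * pdx (pdx (pdx u)) x t
            + 3 * u x t * pdx u x t - 2 * pdx u x t * pdx (pdx u) x t
            - u x t * pdx (pdx (pdx u)) x t) = 0"
  proof -
    fix x t
    have I: "St x t + u x t * Sx x t + 2 * pdx u x t * S x t + pdx (pdx (pdx u)) x t = 0"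
      using schw_iden[where P="p x t" and Px="pdx p x t" and Pxx="pdx (pdx p) x t" and Pxxx="pdx (pdx (pdx p)) x t"
          and U="u x t" and Ux="pdx u x t" and Uxx="pdx (pdx u) x t" and Uxxx="pdx (pdx (pdx u)) x t"
          and Pt="pdt p x t" and Pxt="pdt (pdx p) x t" and Pxxt="pdt (pdx (pdx p)) x t"]
      unfolding St_def Sx_def S_def using p0[of x t] pt pxt pxxt by simp
    have e3: "pdx (pdx u) x t = u x t - a * S x t" unfolding pdxxu by simp
    have e2: "pdx (pdx (pdx u)) x t = pdx u x t - a * Sx x t" unfolding pdx3u by simp
    show "?thesis x t"
      unfolding Let_def ue pdt2u
      using final_alg[OF I e2 e3] by simp
  qed
qed

end
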